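(* Let $N=2$, $J=1$, $h_0=[0,1]^{\sf T}$, $h_1=[\cos\tau,z]^{\sf T}$ with $z=\sin\tau\,e^{i\phi_z}$, $\tau\in[0,\pi/2)$, $\phi_z\in[0,2\pi)$, $\sigma_0^2,\sigma_1^2,\sigma_n^2>0$, and $c_1=|c_1|e^{i\phi_c}$ with $|c_1|\le\sigma_0\sigma_1$, $\phi_c\in[0,2\pi)$. Then for every $\lambda\ge0$, \[ w_{\rm RZF}(\lambda)=\begin{bmatrix}-\dfrac{\cos\tau\,[(\sigma_1^2+\lambda)z^*+c_1]}{(\sigma_1^2+\lambda)\cos^2\tau+\sigma_n^2}\\[2mm] 1\end{bmatrix}, \] and \[ \mathrm{MSE}(\lambda)=\frac{|\delta_2|^2(\sigma_1^2\cos^2\tau+\sigma_n^2)}{g(\lambda)^2}-\frac{2\sigma_n^2\delta_1\tan\tau}{g(\lambda)}+\sigma_n^2(\tan^2\tau+1), \] with $g(\lambda):=\lambda\cos^2\tau+\sigma_1^2\cos^2\tau+\sigma_n^2$, $\delta_1:=\sigma_n^2\tan\tau-|c_1|\cos\tau\cos(\phi_c+\phi_z)$, $\delta_2:=\sigma_n^2\tan\tau-|c_1|\cos\tau\,e^{i(\phi_c+\phi_z)}$. Furthermore: (i) if $\delta_2=0$ (which implies $\delta_1=0$), $\mathrm{MSE}(\lambda)=\sigma_n^2(\tan^2\tau+1)$ for all $\lambda\ge0$; (ii) if $\delta_2\ne0$, let $\gamma:=\delta_1\sigma_n^2\tan\tau/|\delta_2|^2$: (a) if $\gamma\le0$ (equivalently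 $\delta_1\tan\tau\le0$), $\mathrm{MSE}(\lambda)$ is decreasing on $[0,\infty)$ and its infimum is $\lim_{\lambda\to\infty}\mathrm{MSE}(\lambda)$ (ZF optimal); (b) if $\gamma\ge1$, $\mathrm{MSE}(\lambda)$ is increasing and is minimized at $\lambda=0$; (c) if $\gamma\in(0,1)$, $\mathrm{MSE}$ is minimized over $[0,\infty)$ by $\lambda=\dfrac{\sigma_1^2\cos^2\tau+\sigma_n^2}{\cos^2\tau}\cdot\dfrac{1-\gamma}{\gamma}>0$.
   Context: Complex single-interference model: $y(k)=s_0(k)h_0+s_1(k)h_1+n(k)\in\mathbb{C}^N$, with zero-mean jointly weakly stationary complex signals $s_0,s_1$, $\sigma_j^2:=E|s_j(k)|^2$, $c_1:=E[s_0^*(k)s_1(k)]$, and noise $n(k)\sim\mathcal{CN}(0,\sigma_n^2I)$ uncorrelated with the signals. $R:=E[y(k)y(k)^{\sf H}]$. For $\lambda\ge0$, $R_\lambda:=R+\lambda h_1h_1^{\sf H}$ and the RZF beamformer is $w_{\rm RZF}(\lambda):=R_\lambda^{-1}h_0/(h_0^{\sf H}R_\lambda^{-1}h_0)$. The MSE of $w$ is $J_{\rm MSE}(w):=E|w^{\sf H}y(k)-s_0(k)|^2$, and $\mathrm{MSE}(\lambda):=J_{\rm MSE}(w_{\rm RZF}(\lambda))$. *)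

theory Defs
  imports "HOL-Analysis.Analysis"
begin

text \<open>Complex single-interference model y(k) = s0(k) h0 + s1(k) h1 + n(k) in C^N,
  described through its second-order statistics: sig0sq = E|s0|^2, sig1sq = E|s1|^2,
  c1 = E[conj s0 * s1], noise covariance signsq * I, noise uncorrelated with signals.\<close>

definition hdot :: "complex^'n \<Rightarrow> complex^'n \<Rightarrow> complex" where
  "hdot v w = (\<Sum>i\<in>UNIV. cnj (v $ i) * w $ i)"

definition outer :: "complex^'n \<Rightarrow> complex^'n \<Rightarrow> complex^'n^'n" where
  "outer a b = (\<chi> i j. a $ i * cnj (b $ j))"

text \<open>R = E[y y^H] = sig0sq h0 h0^H + sig1sq h1 h1^H + conj(c1) h0 h1^H + c1 h1 h0^H + signsq I\<close>
definition Rcov :: "real \<Rightarrow> real \<Rightarrow> complex \<Rightarrow> real \<Rightarrow> complex^'n \<Rightarrow> complex^'n \<Rightarrow> complex^'n^'n" where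
  "Rcov sig0sq sig1sq c1 signsq h0 h1 =
     (\<chi> i j. of_real sig0sq * outer h0 h0 $ i $ j + of_real sig1sq * outer h1 h1 $ i $ j
            + cnj c1 * outer h0 h1 $ i $ j + c1 * outer h1 h0 $ i $ j
            + (if i = j then of_real signsq else 0))"

definition Rlam :: "real \<Rightarrow> real \<Rightarrow> complex \<Rightarrow> real \<Rightarrow> complex^'n \<Rightarrow> complex^'n \<Rightarrow> real \<Rightarrow> complex^'n^'n" where
  "Rlam sig0sq sig1sq c1 signsq h0 h1 l =
     Rcov sig0sq sig1sq c1 signsq h0 h1 + (\<chi> i j. of_real l * outer h1 h1 $ i $ j)"

definition w_RZF :: "real \<Rightarrow> real \<Rightarrow> complex \<Rightarrow> real \<Rightarrow> complex^'n \<Rightarrow> complex^'n \<Rightarrow> real \<Rightarrow> complex^'n" where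
  "w_RZF sig0sq sig1sq c1 signsq h0 h1 l =
     (let v = matrix_inv (Rlam sig0sq sig1sq c1 signsq h0 h1 l) *v h0
      in (1 / hdot h0 v) *s v)"

text \<open>J_MSE(w) = E|w^H y - s0|^2 = w^H R w - 2 Re(w^H E[y conj s0]) + sig0sq,
  where E[y conj s0] = sig0sq h0 + c1 h1.\<close>
definition J_MSE :: "real \<Rightarrow> real \<Rightarrow> complex \<Rightarrow> real \<Rightarrow> complex^'n \<Rightarrow> complex^'n \<Rightarrow> complex^'n \<Rightarrow> real" where
  "J_MSE sig0sq sig1sq c1 signsq h0 h1 w =
     Re (hdot w (Rcov sig0sq sig1sq c1 signsq h0 h1 *v w))
     - 2 * Re (hdot w (of_real sig0sq *s h0 + c1 *s h1)) + sig0sq"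

end

theory Submission
  imports Defs
begin

lemma hdot2: "hdot (v::complex^2) w = cnj (v$1) * w$1 + cnj (v$2) * w$2"
  by (simp add: hdot_def sum_2)

lemma mv2: "((A::complex^2^2) *v x) = vector [A$1$1 * x$1 + A$1$2 * x$2, A$2$1 * x$1 + A$2$2 * x$2]"
  by (simp add: vec_eq_iff forall_2 matrix_vector_mult_def sum_2)

lemma inv_apply:
  fixes R :: "complex^2^2"
  assumes inv: "invertible R" and Rw: "R *v w = mu *s (vector [0,1])" and w2: "w$2 = 1"
  shows "(let v = matrix_inv R *v (vector [0,1]) in (1 / hdot (vector [0,1]) v) *s v) = w"
proof -
  have "matrix_inv R ** R = mat 1"
    using inv unfolding invertible_def matrix_inv_def by (metis (mono_tags, lifting) someI_ex)
  hence "matrix_inv R *v (R *v w) = w" by (simp add: matrix_vector_mul_assoc)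
  hence e: "mu *s (matrix_inv R *v vector [0,1]) = w" using Rw
    by (simp add: matrix_vector_mult_scaleR vector_scalar_commute)
  have mu: "mu \<noteq> 0" using e w2 by auto
  have v: "matrix_inv R *v vector [0,1] = (1/mu) *s w" using e mu
    by (metis (no_types, lifting) divide_self_if vector_smult_assoc vector_smult_lid
         mult.commute nonzero_divide_eq_eq)
  show ?thesis using mu w2 by (simp add: Let_def v hdot2 vector_smult_assoc)
qed

lemma Rent:
  fixes c P S1 N l :: real and z c1 :: complex
  defines "R \<equiv> Rlam P S1 c1 N (vector [0,1] :: complex^2) (vector [of_real c, z]) l"
  shows "R$1$1 = of_real ((S1+l)*c^2 + N)"
    "R$1$2 = of_real ((S1+l)*c) * cnj z + c1 * of_real c"
    "R$2$1 = of_real ((S1+l)*c) * z + cnj c1 * of_real c"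
    "R$2$2 = of_real (P + N) + of_real (S1+l) * z * cnj z + cnj c1 * cnj z + c1 * z"
  unfolding R_def Rlam_def Rcov_def outer_def
  by (simp_all add: algebra_simps power2_eq_square)

lemma w_formula:
  fixes c s P S1 N l rho sig0 sig1 :: real and z c1 :: complex
  assumes z: "cmod z = s" and c1: "cmod c1 = rho" and sig: "sig0 > 0" "sig1 > 0" "N > 0"
    and P: "P = sig0^2" and S1: "S1 = sig1^2" and l: "l \<ge> 0" and rho: "rho \<le> sig0 * sig1"
  shows "w_RZF P S1 c1 N (vector[0,1] :: complex^2) (vector[of_real c, z]) l =
     vector[-(of_real c * (of_real(S1+l)*cnj z + c1))/of_real((S1+l)*c^2+N), 1]"
proof -
  define R where "R = Rlam P S1 c1 N (vector [0,1] :: complex^2) (vector [of_real c, z]) l"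
  define S where "S = S1 + l"
  define G where "G = S*c^2 + N"
  have Gpos: "G > 0" using sig l unfolding G_def S_def S1
    by (simp add: add_nonneg_pos)
  define a where "a = -(of_real c * (of_real S*cnj z + c1))/of_real G"
  have RE: "R$1$1 = of_real G" "R$1$2 = of_real (S*c) * cnj z + c1 * of_real c"
    "R$2$1 = of_real (S*c) * z + cnj c1 * of_real c"
    "R$2$2 = of_real (P + N) + of_real S * z * cnj z + cnj c1 * cnj z + c1 * z"
    unfolding R_def G_def S_def using Rent by auto
  have zz: "z * cnj z = of_real (s^2)" using z complex_norm_square by metis
  have cc: "c1 * cnj c1 = of_real (rho^2)" using c1 complex_norm_square by metis
  have det: "det R = of_real (c^2*(S*P - rho^2) + N*P + N*S* s^2 + N^2 + S*c^2*N) + of_real N * (c1 * z + cnj (c1 * z))"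
    unfolding det_2 RE G_def
    apply (simp add: algebra_simps power2_eq_square)
    using zz cc by (simp add: power2_eq_square) algebra
  have "Re (c1 * z) \<ge> - (rho * s)"
    using abs_Re_le_cmod[of "c1*z"] z c1 by (auto simp: norm_mult)
  have s0: "s \<ge> 0" using z by auto
  have r0: "rho \<ge> 0" using c1 by auto
  have "S \<ge> S1" using l S_def by simp
  have k1: "S*P - rho^2 \<ge> 0"
  proof -
    have "rho^2 \<le> (sig0* sig1)^2" using rho r0 by (simp add: power_mono)
    also have "\<dots> = S1 * P" by (simp add: P S1 power_mult_distrib)
    also have "\<dots> \<le> S*P" using \<open>S \<ge> S1\<close> P by (simp add: mult_right_mono)
    finally show ?thesis by simp
  qed
  have k2: "P + S* s^2 - 2*rho * s \<ge> 0"
  proof -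
    have "0 \<le> (sig0 - sig1* s)^2" by simp
    hence "2* sig0* sig1* s \<le> P + S1* s^2" by (simp add: P S1 power2_eq_square algebra_simps)
    moreover have "rho* s \<le> sig0* sig1 * s" using rho s0 by (simp add: mult_right_mono)
    moreover have "S1* s^2 \<le> S* s^2" using \<open>S \<ge> S1\<close> by (simp add: mult_right_mono)
    ultimately show ?thesis by linarith
  qed
  have "Re (det R) = c^2*(S*P - rho^2) + N*(P + S* s^2 + 2*Re(c1*z)) + N^2 + S*c^2*N"
    unfolding det by (simp add: algebra_simps power2_eq_square)
  moreover have "N*(P + S* s^2 + 2*Re(c1*z)) \<ge> 0"
    using k2 \<open>Re (c1 * z) \<ge> - (rho * s)\<close> sig by (intro mult_nonneg_nonneg) auto
  moreover have "c^2*(S*P - rho^2) \<ge> 0" using k1 by simp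
  moreover have "S*c^2*N \<ge> 0" using S_def S1 l sig by simp
  ultimately have "Re (det R) > 0" using sig by (smt (verit) zero_less_power)
  hence inv: "invertible R" using invertible_det_nz by force
  define mu where "mu = R$2$1 * a + R$2$2"
  have r1: "R$1$1 * a + R$1$2 = 0"
    unfolding RE a_def using Gpos by (simp add: field_simps)
  have Rw: "R *v vector[a,1] = mu *s vector[0,1]"
    unfolding mv2 using r1 mu_def by (simp add: vec_eq_iff forall_2)
  have "w_RZF P S1 c1 N (vector[0,1] :: complex^2) (vector[of_real c, z]) l = vector[a,1]"
    using inv_apply[OF inv Rw] unfolding w_RZF_def R_def by simp
  then show ?thesis by (simp add: a_def G_def S_def)
qed

lemma Rcent:
  fixes c P S1 N :: real and z c1 :: complex
  defines "R \<equiv> Rcov P S1 c1 N (vector [0,1] :: complex^2) (vector [of_real c, z])"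
  shows "R$1$1 = of_real (S1*c^2 + N)"
    "R$1$2 = of_real (S1*c) * cnj z + c1 * of_real c"
    "R$2$1 = of_real (S1*c) * z + cnj c1 * of_real c"
    "R$2$2 = of_real (P + N) + of_real S1 * z * cnj z + cnj c1 * cnj z + c1 * z"
  unfolding R_def Rcov_def outer_def
  by (simp_all add: algebra_simps power2_eq_square)

lemma J_formula:
  fixes c P S1 N :: real and a z c1 :: complex
  shows "J_MSE P S1 c1 N (vector[0,1] :: complex^2) (vector[of_real c, z]) (vector[a,1])
     = S1 * (cmod (cnj a * of_real c + z))^2 + N * (cmod a)^2 + N"
proof -
  define u where "u = cnj a * of_real c + z"
  define R where "R = Rcov P S1 c1 N (vector [0,1] :: complex^2) (vector [of_real c, z])"
  have X: "hdot (vector[a,1]) (R *v vector[a,1]) =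
     of_real P + of_real N * (a * cnj a) + of_real N + of_real S1 * (u * cnj u) + (c1*u + cnj(c1*u))"
    unfolding hdot2 mv2 R_def Rcent u_def by (simp add: algebra_simps power2_eq_square)
  have Y: "hdot (vector[a,1] :: complex^2) (of_real P *s vector[0,1] + c1 *s vector[of_real c, z]) = of_real P + c1 * u"
    unfolding hdot2 u_def by (simp add: algebra_simps)
  have X': "hdot (vector[a,1]) (R *v vector[a,1]) =
     of_real (P + N * (cmod a)^2 + N + S1 * (cmod u)^2) + of_real (2 * Re (c1*u))"
    unfolding X complex_add_cnj[symmetric] by (simp add: complex_norm_square[symmetric] del: of_real_power)
  show ?thesis unfolding J_MSE_def R_def[symmetric] X' Y u_def[symmetric]
    by simp
qed

lemma cmod_cis_sq: "(cmod (of_real x + of_real y * cis t))^2 = x^2 + 2*x*y*cos t + y^2"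
proof -
  have "(cmod (of_real x + of_real y * cis t))^2 = (x + y * cos t)^2 + (y * sin t)^2"
    by (simp add: cmod_power2)
  also have "\<dots> = x^2 + 2*x*y*cos t + y^2"
    using sin_cos_squared_add[of t] by algebra
  finally show ?thesis .
qed

lemma mse_closed:
  fixes tau phiz phic N S1 l rho :: real and z c1 a :: complex
  assumes tau: "0 \<le> tau" "tau < pi/2" and N: "N > 0" and S1: "S1 > 0" and l: "l \<ge> 0"
    and z_def: "z = of_real (sin tau) * cis phiz"
    and c1_def: "c1 = of_real rho * cis phic"
    and a_def: "a = -(of_real (cos tau) * (of_real(S1+l)*cnj z + c1))/of_real((S1+l)*(cos tau)^2+N)"
  shows "S1 * (cmod (cnj a * of_real (cos tau) + z))^2 + N * (cmod a)^2 + N =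
     (cmod (of_real (N * tan tau) - of_real (rho * cos tau) * cis (phic + phiz)))^2 * (S1 * (cos tau)^2 + N)
        / (l * (cos tau)^2 + S1 * (cos tau)^2 + N)^2
     - 2 * N * (N * tan tau - rho * cos tau * cos (phic + phiz)) * tan tau / (l * (cos tau)^2 + S1 * (cos tau)^2 + N)
     + N * ((tan tau)^2 + 1)"
proof -
  define c where "c = cos tau"
  define s where "s = sin tau"
  define th where "th = phic + phiz"
  define S where "S = S1 + l"
  define G where "G = S*c^2 + N"
  have c0: "c > 0" unfolding c_def using tau by (intro cos_gt_zero_pi) auto
  have cs: "s^2 = 1 - c^2" unfolding c_def s_def by (simp add: sin_squared_eq)
  have Gpos: "G > 0" unfolding G_def S_def using N S1 l by (simp add: add_nonneg_pos)
  have tn: "tan tau = s / c" unfolding s_def c_def tan_def by simp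
  define e1 where "e1 = cis phiz"
  define e2 where "e2 = cis phic"
  have e0: "e1 \<noteq> 0" "e2 \<noteq> 0" unfolding e1_def e2_def by auto
  have ce: "cnj e1 = inverse e1" "cnj e2 = inverse e2" unfolding e1_def e2_def
    by (simp_all add: cis_cnj cis_inverse)
  have cth: "cis th = e2 * e1" "cis (-th) = inverse (e2 * e1)" unfolding th_def e1_def e2_def
    by (simp_all add: cis_mult cis_inverse[symmetric])
  have G0: "complex_of_real G \<noteq> 0" using Gpos by simp
  have Gc: "complex_of_real G = of_real S * (of_real c)^2 + of_real N" unfolding G_def by simp
  have a2: "a = -(of_real c * (of_real S * of_real s * inverse e1 + of_real rho * e2)) / of_real G"
    unfolding a_def z_def c1_def c_def[symmetric] s_def[symmetric] e1_def[symmetric] e2_def[symmetric]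
    G_def[symmetric, unfolded S_def] by (simp add: ce S_def)
  have ca: "cnj a = -(of_real c * (of_real S * of_real s * e1 + of_real rho * inverse e2)) / of_real G"
    unfolding a2 by (simp add: ce)
  have u: "cnj a * of_real c + z = (of_real (N * s) + of_real (-(c^2*rho)) * cis (-th)) * e1 / of_real G"
  proof -
    have "cnj a * of_real c + z = (of_real s * e1 * of_real G - (of_real c)^2 * (of_real S * of_real s * e1 + of_real rho * inverse e2)) / of_real G"
      unfolding ca z_def s_def[symmetric] e1_def[symmetric] using G0 by (simp add: field_simps power2_eq_square)
    also have "\<dots> = (of_real N * of_real s * e1 - (of_real c)^2 * of_real rho * inverse e2) / of_real G"
      unfolding Gc by (simp add: algebra_simps)
    also have "\<dots> = (of_real (N * s) + of_real (-(c^2*rho)) * cis (-th)) * e1 / of_real G"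
      unfolding cth using e0 G0 by (simp add: field_simps)
    finally show ?thesis .
  qed
  have av: "a = - of_real c * ((of_real (S * s) + of_real rho * cis th) * inverse e1) / of_real G"
    unfolding a2 cth using e0 G0 by (simp add: field_simps)
  have ne: "cmod e1 = 1" unfolding e1_def by simp
  have U0: "cmod (cnj a * of_real c + z) = cmod (of_real (N * s) + of_real (-(c^2*rho)) * cis (-th)) / G"
    unfolding u by (simp only: norm_divide norm_mult ne mult_1_right norm_of_real abs_of_pos[OF Gpos])
  have U: "(cmod (cnj a * of_real c + z))^2 = (N^2 * s^2 - 2*N * s*c^2*rho*cos th + c^2*c^2*rho^2) / G^2"
    unfolding U0 power_divide cmod_cis_sq by (simp add: power2_eq_square algebra_simps)
  have A0: "cmod a = c * cmod (of_real (S * s) + of_real rho * cis th) / G"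
    unfolding av using c0 Gpos
    by (simp only: norm_divide norm_mult norm_minus_cancel norm_inverse ne mult_1_right inverse_1 norm_of_real abs_of_pos)
  have A: "(cmod a)^2 = c^2 * (S^2 * s^2 + 2*S * s*rho*cos th + rho^2) / G^2"
    unfolding A0 power_divide power_mult_distrib cmod_cis_sq by (simp add: power2_eq_square algebra_simps)
  have D: "(cmod (of_real (N * tan tau) - of_real (rho * cos tau) * cis (phic + phiz)))^2
     = (N * (s/c))^2 - 2*(N * (s/c))*(rho*c)*cos th + (rho*c)^2"
    using cmod_cis_sq[of "N * tan tau" "-(rho * cos tau)" th] unfolding th_def[symmetric] tn c_def[symmetric]
    by (simp add: power2_eq_square)
  have gG: "l * c^2 + S1 * c^2 + N = G" unfolding G_def S_def by (simp add: algebra_simps)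
  have c2: "c^2 \<noteq> 0" using c0 by simp
  have G2: "G^2 \<noteq> 0" using Gpos by simp
  define t where "t = tan tau"
  have st: "s = t * c" unfolding t_def tn using c0 by simp
  have U': "(cmod (cnj a * of_real c + z))^2 = c^2 * ((N*t)^2 - 2*(N*t)*(rho*c)*cos th + (rho*c)^2) / G^2"
    unfolding U st by (simp add: power2_eq_square algebra_simps)
  have A': "(cmod a)^2 = c^2 * (S^2 * (t*c)^2 + 2*S * (t*c)*rho*cos th + rho^2) / G^2"
    unfolding A st by simp
  have D': "(cmod (of_real (N * tan tau) - of_real (rho * cos tau) * cis (phic + phiz)))^2
     = (N*t)^2 - 2*(N*t)*(rho*c)*cos th + (rho*c)^2"
    unfolding D st using c0 by simp
  define DD where "DD = (N*t)^2 - 2*(N*t)*(rho*c)*cos th + (rho*c)^2"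
  define Q where "Q = S^2 * (t*c)^2 + 2*S * (t*c)*rho*cos th + rho^2"
  have poly: "S1*(c^2*DD) + N*(c^2*Q) + N*G^2 = DD*(S1*c^2+N) - 2*N*(N*t - rho*c*cos th)*t*G + N*(t^2+1)*G^2"
    unfolding G_def DD_def Q_def by (simp add: power2_eq_square algebra_simps)
  have L: "S1*(c^2*DD/G^2) + N*(c^2*Q/G^2) + N = (S1*(c^2*DD) + N*(c^2*Q) + N*G^2)/G^2"
    using G2 by (simp add: add_divide_distrib)
  have R: "DD*(S1*c^2+N)/G^2 - 2*N*(N*t - rho*c*cos th)*t/G + N*(t^2+1)
     = (DD*(S1*c^2+N) - 2*N*(N*t - rho*c*cos th)*t*G + N*(t^2+1)*G^2)/G^2"
    using G2 Gpos by (simp add: add_divide_distrib diff_divide_distrib power2_eq_square)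
  show ?thesis
    unfolding D' unfolding c_def[symmetric] t_def[symmetric] th_def[symmetric] U' A' gG DD_def[symmetric] Q_def[symmetric]
    using L R poly by (simp add: mult.assoc)
qed

theorem lemma3:
  fixes tau phiz phic sig0 sig1 sign rho :: real
    and z c1 :: complex and h0 h1 :: "complex^2"
    and MSE :: "real \<Rightarrow> real" and g :: "real \<Rightarrow> real"
    and delta1 gamma :: real and delta2 :: complex
  assumes tau: "0 \<le> tau" "tau < pi / 2"
    and phiz: "0 \<le> phiz" "phiz < 2 * pi"
    and phic: "0 \<le> phic" "phic < 2 * pi"
    and sig: "sig0 > 0" "sig1 > 0" "sign > 0"
    and rho: "0 \<le> rho" "rho \<le> sig0 * sig1"
    and z_def: "z = of_real (sin tau) * cis phiz"
    and c1_def: "c1 = of_real rho * cis phic"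
    and h0_def: "h0 = vector [0, 1]"
    and h1_def: "h1 = vector [of_real (cos tau), z]"
    and MSE_def: "MSE = (\<lambda>l. J_MSE (sig0^2) (sig1^2) c1 (sign^2) h0 h1
                                  (w_RZF (sig0^2) (sig1^2) c1 (sign^2) h0 h1 l))"
    and g_def: "g = (\<lambda>l. l * (cos tau)^2 + sig1^2 * (cos tau)^2 + sign^2)"
    and delta1_def: "delta1 = sign^2 * tan tau - rho * cos tau * cos (phic + phiz)"
    and delta2_def: "delta2 = of_real (sign^2 * tan tau) - of_real (rho * cos tau) * cis (phic + phiz)"
    and gamma_def: "gamma = delta1 * sign^2 * tan tau / (cmod delta2)^2"
  shows
    "(\<forall>l\<ge>0. w_RZF (sig0^2) (sig1^2) c1 (sign^2) h0 h1 l =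
        vector [- (of_real (cos tau) * (of_real (sig1^2 + l) * cnj z + c1))
                  / of_real ((sig1^2 + l) * (cos tau)^2 + sign^2), 1])
   \<and> (\<forall>l\<ge>0. MSE l = (cmod delta2)^2 * (sig1^2 * (cos tau)^2 + sign^2) / (g l)^2
                     - 2 * sign^2 * delta1 * tan tau / g l + sign^2 * ((tan tau)^2 + 1))
   \<and> (delta2 = 0 \<longrightarrow> delta1 = 0 \<and> (\<forall>l\<ge>0. MSE l = sign^2 * ((tan tau)^2 + 1)))
   \<and> (delta2 \<noteq> 0 \<longrightarrow>
        (gamma \<le> 0 \<longleftrightarrow> delta1 * tan tau \<le> 0)
      \<and> (gamma \<le> 0 \<longrightarrow>
           (\<forall>x y. 0 \<le> x \<longrightarrow> x < y \<longrightarrow> MSE y < MSE x)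
         \<and> (MSE \<longlongrightarrow> (INF l\<in>{0..}. MSE l)) at_top)
      \<and> (gamma \<ge> 1 \<longrightarrow>
           (\<forall>x y. 0 \<le> x \<longrightarrow> x < y \<longrightarrow> MSE x < MSE y)
         \<and> (\<forall>l\<ge>0. MSE 0 \<le> MSE l))
      \<and> (0 < gamma \<and> gamma < 1 \<longrightarrow>
           (let lopt = (sig1^2 * (cos tau)^2 + sign^2) / (cos tau)^2 * ((1 - gamma) / gamma)
            in lopt > 0 \<and> (\<forall>l\<ge>0. MSE lopt \<le> MSE l))))"
proof -
  define c where "c = cos tau"
  define s where "s = sin tau"
  have c0: "c > 0" unfolding c_def using tau by (intro cos_gt_zero_pi) auto
  have s0: "s \<ge> 0" unfolding s_def using tau by (intro sin_ge_zero) auto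
  have cz: "cmod z = sin tau" unfolding z_def using s0 s_def by (simp add: norm_mult)
  have cc1: "cmod c1 = rho" unfolding c1_def using rho by (simp add: norm_mult)
  have W: "\<forall>l\<ge>0. w_RZF (sig0^2) (sig1^2) c1 (sign^2) h0 h1 l =
        vector [- (of_real (cos tau) * (of_real (sig1^2 + l) * cnj z + c1))
                  / of_real ((sig1^2 + l) * (cos tau)^2 + sign^2), 1]"
  proof (intro allI impI)
    fix l :: real assume l: "l \<ge> 0"
    show "w_RZF (sig0^2) (sig1^2) c1 (sign^2) h0 h1 l =
        vector [- (of_real (cos tau) * (of_real (sig1^2 + l) * cnj z + c1))
                  / of_real ((sig1^2 + l) * (cos tau)^2 + sign^2), 1]"
      unfolding h0_def h1_def by (rule w_formula[OF cz cc1]) (use sig rho l in auto)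
  qed
  have MS: "\<forall>l\<ge>0. MSE l = (cmod delta2)^2 * (sig1^2 * (cos tau)^2 + sign^2) / (g l)^2
                     - 2 * sign^2 * delta1 * tan tau / g l + sign^2 * ((tan tau)^2 + 1)"
  proof (intro allI impI)
    fix l :: real assume l: "l \<ge> 0"
    define a where "a = -(of_real (cos tau) * (of_real(sig1^2+l)*cnj z + c1))/of_real((sig1^2+l)*(cos tau)^2+sign^2)"
    have "MSE l = J_MSE (sig0^2) (sig1^2) c1 (sign^2) h0 h1 (vector[a,1])"
      unfolding MSE_def using W l a_def by simp
    also have "\<dots> = sig1^2 * (cmod (cnj a * of_real (cos tau) + z))^2 + sign^2 * (cmod a)^2 + sign^2"
      unfolding h0_def h1_def by (rule J_formula)
    also have "\<dots> = (cmod delta2)^2 * (sig1^2 * (cos tau)^2 + sign^2) / (g l)^2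
                     - 2 * sign^2 * delta1 * tan tau / g l + sign^2 * ((tan tau)^2 + 1)"
      unfolding delta2_def delta1_def g_def
      by (rule mse_closed[OF tau _ _ l z_def c1_def a_def]) (use sig in auto)
    finally show "MSE l = (cmod delta2)^2 * (sig1^2 * (cos tau)^2 + sign^2) / (g l)^2
                     - 2 * sign^2 * delta1 * tan tau / g l + sign^2 * ((tan tau)^2 + 1)" .
  qed
  define g0 where "g0 = sig1^2 * (cos tau)^2 + sign^2"
  define Dsq where "Dsq = (cmod delta2)^2"
  define B where "B = sign^2 * delta1 * tan tau"
  define C where "C = sign^2 * ((tan tau)^2 + 1)"
  define F where "F = (\<lambda>x. Dsq * g0 * x^2 - 2 * B * x + C)"
  have g0pos: "g0 > 0" using sig by (simp add: g0_def add_nonneg_pos)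
  have c2: "(cos tau)^2 > 0" using c0 c_def by simp
  have gl: "\<And>l. g l = l * (cos tau)^2 + g0" unfolding g_def g0_def by simp
  have gge: "\<And>l. l \<ge> 0 \<Longrightarrow> g l \<ge> g0" using c2 gl by simp
  have gpos: "\<And>l. l \<ge> 0 \<Longrightarrow> g l > 0" using gge g0pos by (meson less_le_trans)
  have Mf: "\<And>l. l \<ge> 0 \<Longrightarrow> MSE l = F (1 / g l)"
    using MS by (simp add: F_def B_def C_def Dsq_def g0_def power_divide mult.assoc)
  have Fd: "\<And>x y. F x - F y = (x - y) * (Dsq * g0 * (x + y) - 2 * B)"
    by (simp add: F_def algebra_simps power2_eq_square)
  have mono_g: "\<And>x y. 0 \<le> x \<Longrightarrow> x < y \<Longrightarrow> 1 / g y < 1 / g x"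
  proof -
    fix x y :: real assume "0 \<le> x" "x < y"
    hence "g x < g y" using gl c2 by simp
    thus "1 / g y < 1 / g x" using gpos \<open>0 \<le> x\<close> by (simp add: frac_less2)
  qed
  have xle: "\<And>l. l \<ge> 0 \<Longrightarrow> 1 / g l \<le> 1 / g0" using gge g0pos by (simp add: frac_le)
  have xpos: "\<And>l. l \<ge> 0 \<Longrightarrow> 1 / g l > 0" using gpos by simp
  have Re2: "Re delta2 = delta1" unfolding delta2_def delta1_def by simp
  have P3: "delta2 = 0 \<longrightarrow> delta1 = 0 \<and> (\<forall>l\<ge>0. MSE l = sign^2 * ((tan tau)^2 + 1))"
  proof
    assume d: "delta2 = 0"
    hence d1: "delta1 = 0" using Re2 by simp
    show "delta1 = 0 \<and> (\<forall>l\<ge>0. MSE l = sign^2 * ((tan tau)^2 + 1))"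
      using d d1 MS by simp
  qed
  have P4: "delta2 \<noteq> 0 \<longrightarrow>
        (gamma \<le> 0 \<longleftrightarrow> delta1 * tan tau \<le> 0)
      \<and> (gamma \<le> 0 \<longrightarrow>
           (\<forall>x y. 0 \<le> x \<longrightarrow> x < y \<longrightarrow> MSE y < MSE x)
         \<and> (MSE \<longlongrightarrow> (INF l\<in>{0..}. MSE l)) at_top)
      \<and> (gamma \<ge> 1 \<longrightarrow>
           (\<forall>x y. 0 \<le> x \<longrightarrow> x < y \<longrightarrow> MSE x < MSE y)
         \<and> (\<forall>l\<ge>0. MSE 0 \<le> MSE l))
      \<and> (0 < gamma \<and> gamma < 1 \<longrightarrow>
           (let lopt = (sig1^2 * (cos tau)^2 + sign^2) / (cos tau)^2 * ((1 - gamma) / gamma)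
            in lopt > 0 \<and> (\<forall>l\<ge>0. MSE lopt \<le> MSE l)))"
  proof
    assume d2: "delta2 \<noteq> 0"
    have Dpos: "Dsq > 0" using d2 Dsq_def by simp
    have gB: "gamma = B / Dsq" unfolding gamma_def B_def Dsq_def by (simp add: mult_ac)
    have Bg: "B = gamma * Dsq" using gB Dpos by simp
    have B': "B = sign^2 * (delta1 * tan tau)" unfolding B_def by (simp add: mult_ac)
    have i1: "gamma \<le> 0 \<longleftrightarrow> delta1 * tan tau \<le> 0"
    proof -
      have "gamma \<le> 0 \<longleftrightarrow> B \<le> 0" using gB Dpos by (simp add: divide_le_0_iff)
      also have "\<dots> \<longleftrightarrow> delta1 * tan tau \<le> 0" using B' sig by (simp add: mult_le_0_iff)
      finally show ?thesis .
    qed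
    have i2: "gamma \<le> 0 \<longrightarrow>
           (\<forall>x y. 0 \<le> x \<longrightarrow> x < y \<longrightarrow> MSE y < MSE x)
         \<and> (MSE \<longlongrightarrow> (INF l\<in>{0..}. MSE l)) at_top"
    proof
      assume gn: "gamma \<le> 0"
      hence Bn: "B \<le> 0" using Bg Dpos by (simp add: mult_nonpos_nonneg)
      have dec: "\<forall>x y. 0 \<le> x \<longrightarrow> x < y \<longrightarrow> MSE y < MSE x"
      proof (intro allI impI)
        fix x y :: real assume xy: "0 \<le> x" "x < y"
        have p: "1 / g y < 1 / g x" using mono_g xy by blast
        have "Dsq * g0 * (1 / g x + 1 / g y) > 0" using Dpos g0pos xpos[of x] xpos[of y] xy
          by (intro mult_pos_pos add_pos_pos) auto
        hence "F (1 / g x) - F (1 / g y) > 0" unfolding Fd using p Bn by simp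
        thus "MSE y < MSE x" using Mf xy by simp
      qed
      have low: "\<And>l. l \<ge> 0 \<Longrightarrow> C < MSE l"
      proof -
        fix l :: real assume l: "l \<ge> 0"
        have "F (1 / g l) - C = (1 / g l) * (Dsq * g0 * (1 / g l) - 2 * B)"
          by (simp add: F_def algebra_simps power2_eq_square)
        moreover have "Dsq * g0 * (1 / g l) > 0" using Dpos g0pos xpos l by simp
        ultimately have "F (1 / g l) - C > 0" using xpos[OF l] Bn by simp
        thus "C < MSE l" using Mf l by simp
      qed
      have lim0: "((\<lambda>l. 1 / g l) \<longlongrightarrow> 0) at_top"
      proof -
        have "filterlim (\<lambda>l. (cos tau)^2 * l) at_top at_top"
          by (rule filterlim_tendsto_pos_mult_at_top[OF tendsto_const c2 filterlim_ident])
        hence "filterlim (\<lambda>l. g0 + (cos tau)^2 * l) at_top at_top"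
          by (rule filterlim_tendsto_add_at_top[OF tendsto_const])
        moreover have "g = (\<lambda>l. g0 + (cos tau)^2 * l)" using gl by (auto simp: mult.commute)
        ultimately have "filterlim g at_infinity at_top"
          by (simp add: filterlim_at_top_imp_at_infinity)
        thus ?thesis by (rule tendsto_divide_0[OF tendsto_const])
      qed
      have limF: "((\<lambda>l. F (1 / g l)) \<longlongrightarrow> F 0) at_top"
        unfolding F_def by (intro tendsto_intros lim0)
      have limM: "(MSE \<longlongrightarrow> C) at_top"
      proof -
        have "\<forall>\<^sub>F l in at_top. F (1 / g l) = MSE l"
          using eventually_ge_at_top[of "0::real"] by eventually_elim (simp add: Mf)
        thus ?thesis using limF tendsto_cong unfolding F_def by fastforce
      qed
      have bdd: "bdd_below (MSE ` {0..})"
        using low by (intro bdd_belowI[of _ C]) (auto intro: less_imp_le)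
      have I1: "C \<le> (INF l\<in>{0..}. MSE l)"
        by (rule cINF_greatest) (auto intro: less_imp_le low)
      have I2: "(INF l\<in>{0..}. MSE l) \<le> C"
      proof (rule tendsto_le[OF trivial_limit_at_top_linorder limM tendsto_const])
        show "\<forall>\<^sub>F l in at_top. (INF l\<in>{0..}. MSE l) \<le> MSE l"
          using eventually_ge_at_top[of "0::real"]
          by eventually_elim (rule cINF_lower[OF bdd], simp)
      qed
      have "(INF l\<in>{0..}. MSE l) = C" using I1 I2 by simp
      thus "(\<forall>x y. 0 \<le> x \<longrightarrow> x < y \<longrightarrow> MSE y < MSE x)
         \<and> (MSE \<longlongrightarrow> (INF l\<in>{0..}. MSE l)) at_top" using dec limM by simp
    qed
    have i3: "gamma \<ge> 1 \<longrightarrow>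
           (\<forall>x y. 0 \<le> x \<longrightarrow> x < y \<longrightarrow> MSE x < MSE y)
         \<and> (\<forall>l\<ge>0. MSE 0 \<le> MSE l)"
    proof
      assume g1: "gamma \<ge> 1"
      have BD: "B \<ge> Dsq" using Bg g1 Dpos by (simp add: mult_right_mono)
      have inc: "\<forall>x y. 0 \<le> x \<longrightarrow> x < y \<longrightarrow> MSE x < MSE y"
      proof (intro allI impI)
        fix x y :: real assume xy: "0 \<le> x" "x < y"
        have p: "1 / g y < 1 / g x" using mono_g xy by blast
        have q1: "1 / g x \<le> 1 / g0" using xle xy by simp
        have q2: "1 / g y < 1 / g0" using p q1 by simp
        have "g0 * (1 / g x + 1 / g y) < 2"
        proof -
          have "g0 * (1 / g x + 1 / g y) < g0 * (2 / g0)"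
            using q1 q2 g0pos by (intro mult_strict_left_mono) auto
          thus ?thesis using g0pos by simp
        qed
        hence "Dsq * (g0 * (1 / g x + 1 / g y)) < Dsq * 2" using Dpos by simp
        hence "Dsq * g0 * (1 / g x + 1 / g y) - 2 * B < 0" using BD by (simp add: mult.assoc)
        hence "F (1 / g x) - F (1 / g y) < 0" unfolding Fd using p by (simp add: mult_pos_neg)
        thus "MSE x < MSE y" using Mf xy by simp
      qed
      moreover have "\<forall>l\<ge>0. MSE 0 \<le> MSE l"
        using inc by (metis order.order_iff_strict)
      ultimately show "(\<forall>x y. 0 \<le> x \<longrightarrow> x < y \<longrightarrow> MSE x < MSE y)
         \<and> (\<forall>l\<ge>0. MSE 0 \<le> MSE l)" by simp
    qed
    have i4: "0 < gamma \<and> gamma < 1 \<longrightarrow>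
           (let lopt = (sig1^2 * (cos tau)^2 + sign^2) / (cos tau)^2 * ((1 - gamma) / gamma)
            in lopt > 0 \<and> (\<forall>l\<ge>0. MSE lopt \<le> MSE l))"
    proof
      assume gg: "0 < gamma \<and> gamma < 1"
      define lopt where "lopt = g0 / (cos tau)^2 * ((1 - gamma) / gamma)"
      have lp: "lopt > 0" unfolding lopt_def using g0pos c2 gg by simp
      have glo: "g lopt = g0 / gamma" unfolding gl lopt_def using c2 gg by (simp add: field_simps)
      have HML: "MSE lopt = F (gamma / g0)" using Mf[of lopt] lp glo by simp
      have "\<forall>l\<ge>0. MSE lopt \<le> MSE l"
      proof (intro allI impI)
        fix l :: real assume l: "l \<ge> 0"
        have "\<And>x. F x - F (gamma / g0) = Dsq * g0 * (x - gamma / g0)^2"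
          unfolding F_def Bg using g0pos by (simp add: field_simps power2_eq_square)
        hence "F (1 / g l) - F (gamma / g0) = Dsq * g0 * (1 / g l - gamma / g0)^2" by blast
        hence "F (gamma / g0) \<le> F (1 / g l)" using Dpos g0pos
          by (smt (verit) mult_pos_pos zero_le_power2 mult_nonneg_nonneg)
        thus "MSE lopt \<le> MSE l" using HML Mf l by simp
      qed
      thus "let lopt = (sig1^2 * (cos tau)^2 + sign^2) / (cos tau)^2 * ((1 - gamma) / gamma)
            in lopt > 0 \<and> (\<forall>l\<ge>0. MSE lopt \<le> MSE l)"
        using lp unfolding lopt_def g0_def Let_def by simp
    qed
    show "(gamma \<le> 0 \<longleftrightarrow> delta1 * tan tau \<le> 0)
      \<and> (gamma \<le> 0 \<longrightarrow>
           (\<forall>x y. 0 \<le> x \<longrightarrow> x < y \<longrightarrow> MSE y < MSE x)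
         \<and> (MSE \<longlongrightarrow> (INF l\<in>{0..}. MSE l)) at_top)
      \<and> (gamma \<ge> 1 \<longrightarrow>
           (\<forall>x y. 0 \<le> x \<longrightarrow> x < y \<longrightarrow> MSE x < MSE y)
         \<and> (\<forall>l\<ge>0. MSE 0 \<le> MSE l))
      \<and> (0 < gamma \<and> gamma < 1 \<longrightarrow>
           (let lopt = (sig1^2 * (cos tau)^2 + sign^2) / (cos tau)^2 * ((1 - gamma) / gamma)
            in lopt > 0 \<and> (\<forall>l\<ge>0. MSE lopt \<le> MSE l)))"
      using i1 i2 i3 i4 by blast
  qed
  show ?thesis using W MS P3 P4 by blast
qed

end
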